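(* Let $(V_i)_{i\ge1}$ be real-valued random variables such that $\mu(0,x):=\mathbb{E}\sum_i\mathbf{1}_{\{0<V_i<x\}}$ satisfies $\limsup_{x\downarrow0}\mu(0,x)/x<\infty$. Then there exist $\beta>0$ and $s_0>0$ such that for every sequence of events $A_i\subseteq\{V_i>0\}$ with $s:=\sum_i\mathbb{P}(A_i)\le s_0$, \[ \mathbb{E}\sum_i V_i\mathbf{1}_{A_i}\ \ge\ \beta s^2 . \] *)

theory Defs
  imports "HOL-Probability.Probability"
begin

definition mu_int :: "'a measure \<Rightarrow> (nat \<Rightarrow> 'a \<Rightarrow> real) \<Rightarrow> real \<Rightarrow> ennreal" where
  "mu_int M V x = (\<integral>\<^sup>+ \<omega>. (\<Sum>i. indicator {\<omega>. 0 < V i \<omega> \<and> V i \<omega> < x} \<omega>) \<partial>M)"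

end

theory Submission
  imports Defs
begin

lemma mu_bound:
  fixes m :: ennreal and x c :: real
  assumes "m / ennreal x < ennreal c" "x > 0" "c > 0"
  shows "m \<le> ennreal (c * x)"
proof -
  have "m = (m / ennreal x) * ennreal x"
    using assms(2) by (simp add: ennreal_divide_times ennreal_divide_self)
  also have "\<dots> \<le> ennreal c * ennreal x"
    using assms(1) by (intro mult_right_mono) auto
  finally show ?thesis using assms(2,3) by (simp add: ennreal_mult)
qed

theorem mainTheorem5:
  fixes M :: "'a measure" and V :: "nat \<Rightarrow> 'a \<Rightarrow> real"
  assumes "prob_space M"
    and "\<And>i. V i \<in> borel_measurable M"
    and "Limsup (at_right 0) (\<lambda>x. mu_int M V x / ennreal x) < \<top>"
  shows "\<exists>\<beta>::real. \<exists>s0::real. \<beta> > 0 \<and> s0 > 0 \<and>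
    (\<forall>A :: nat \<Rightarrow> 'a set.
       (\<forall>i. A i \<in> sets M \<and> A i \<subseteq> {\<omega> \<in> space M. V i \<omega> > 0}) \<longrightarrow>
       (\<Sum>i. emeasure M (A i)) \<le> ennreal s0 \<longrightarrow>
       (\<integral>\<^sup>+ \<omega>. (\<Sum>i. ennreal (V i \<omega> * indicator (A i) \<omega>)) \<partial>M)
         \<ge> ennreal \<beta> * (\<Sum>i. emeasure M (A i))\<^sup>2)"
proof -
  obtain n :: nat where n: "Limsup (at_right 0) (\<lambda>x. mu_int M V x / ennreal x) < of_nat n"
    using ennreal_Ex_less_of_nat[OF assms(3)] by blast
  define c :: real where "c = real n + 1"
  have cpos: "c > 0" unfolding c_def by simp
  have "Limsup (at_right 0) (\<lambda>x. mu_int M V x / ennreal x) < ennreal c"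
    using n unfolding c_def
    by (metis ennreal_of_nat_eq_real_of_nat ennreal_less_iff less_add_one of_nat_0_le_iff order.strict_trans)
  from Limsup_lessD[OF this] obtain \<delta> :: real where dpos: "\<delta> > 0"
    and dbd: "\<And>y. y > 0 \<Longrightarrow> y < \<delta> \<Longrightarrow> mu_int M V y / ennreal y < ennreal c"
    unfolding eventually_at_right_field by auto
  have mub: "mu_int M V y \<le> ennreal (c * y)" if "y > 0" "y < \<delta>" for y
    using mu_bound[OF dbd[OF that] that(1) cpos] .
  define \<beta> where "\<beta> = 1 / (4 * c)"
  define s0 where "s0 = c * \<delta>"
  show ?thesis
  proof (intro exI conjI allI impI)
    show "\<beta> > 0" "s0 > 0" using cpos dpos unfolding \<beta>_def s0_def by auto
    fix A :: "nat \<Rightarrow> 'a set"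
    assume A: "\<forall>i. A i \<in> sets M \<and> A i \<subseteq> {\<omega> \<in> space M. V i \<omega> > 0}"
      and S: "(\<Sum>i. emeasure M (A i)) \<le> ennreal s0"
    define I where "I = (\<integral>\<^sup>+ \<omega>. (\<Sum>i. ennreal (V i \<omega> * indicator (A i) \<omega>)) \<partial>M)"
    define s where "s = enn2real (\<Sum>i. emeasure M (A i))"
    have Sfin: "(\<Sum>i. emeasure M (A i)) < \<top>"
      using S le_less_trans ennreal_less_top by blast
    have s1: "(\<Sum>i. emeasure M (A i)) = ennreal s"
      using Sfin unfolding s_def by simp
    have s2: "s \<le> s0" using S s1 \<open>s0 > 0\<close> by simp
    have s: "(\<Sum>i. emeasure M (A i)) = ennreal s" "0 \<le> s" "s \<le> s0"
      using s1 s2 unfolding s_def by auto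
    show "I \<ge> ennreal \<beta> * (\<Sum>i. emeasure M (A i))\<^sup>2"
      unfolding I_def[symmetric]
    proof (cases "s = 0")
      case True then show ?thesis using s by simp
    next
      case False
      then have spos: "s > 0" using s by simp
      define x where "x = s / (2 * c)"
      have xpos: "x > 0" using spos cpos unfolding x_def by simp
      have xd: "x < \<delta>"
      proof -
        have "x \<le> \<delta> / 2" using s(3) cpos unfolding x_def s0_def by (simp add: field_simps)
        then show ?thesis using dpos by simp
      qed
      have meas1: "(\<lambda>\<omega>. ennreal (V i \<omega> * indicator (A i) \<omega>)) \<in> borel_measurable M" for i
        using assms(2)[of i] A by (intro measurable_compose[OF _ measurable_ennreal] borel_measurable_times borel_measurable_indicator) auto
      have meas2: "(\<lambda>\<omega>. indicator {\<omega>. 0 < V i \<omega> \<and> V i \<omega> < x} \<omega> :: ennreal) \<in> borel_measurable M" for i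
      proof -
        have "{\<omega>. 0 < V i \<omega> \<and> V i \<omega> < x} \<inter> space M = {\<omega> \<in> space M. 0 < V i \<omega> \<and> V i \<omega> < x}" by auto
        also have "\<dots> \<in> sets M" using assms(2)[of i] by measurable
        finally show ?thesis by (subst borel_measurable_indicator_iff)
      qed
      have point: "(\<Sum>i. ennreal (V i \<omega> * indicator (A i) \<omega>)) + ennreal x * (\<Sum>i. indicator {\<omega>. 0 < V i \<omega> \<and> V i \<omega> < x} \<omega>)
           \<ge> ennreal x * (\<Sum>i. indicator (A i) \<omega>)" if "\<omega> \<in> space M" for \<omega>
      proof -
        have trm: "ennreal x * indicator (A i) \<omega> \<le> ennreal (V i \<omega> * indicator (A i) \<omega>) + ennreal x * indicator {\<omega>. 0 < V i \<omega> \<and> V i \<omega> < x} \<omega>" for i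
        proof (cases "\<omega> \<in> A i")
          case True
          then have "V i \<omega> > 0" using A by auto
          then show ?thesis using True xpos
            by (cases "V i \<omega> < x") (auto simp: indicator_def intro: add_increasing2 add_increasing)
        qed (simp add: indicator_def)
        have "ennreal x * (\<Sum>i. indicator (A i) \<omega>) = (\<Sum>i. ennreal x * indicator (A i) \<omega>)" by simp
        also have "\<dots> \<le> (\<Sum>i. ennreal (V i \<omega> * indicator (A i) \<omega>) + ennreal x * indicator {\<omega>. 0 < V i \<omega> \<and> V i \<omega> < x} \<omega>)"
          by (intro suminf_le trm summableI)
        also have "\<dots> = (\<Sum>i. ennreal (V i \<omega> * indicator (A i) \<omega>)) + (\<Sum>i. ennreal x * indicator {\<omega>. 0 < V i \<omega> \<and> V i \<omega> < x} \<omega>)"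
          by (intro suminf_add[symmetric] summableI)
        also have "\<dots> = (\<Sum>i. ennreal (V i \<omega> * indicator (A i) \<omega>)) + ennreal x * (\<Sum>i. indicator {\<omega>. 0 < V i \<omega> \<and> V i \<omega> < x} \<omega>)"
          by simp
        finally show ?thesis .
      qed
      have meas3: "(\<lambda>\<omega>. indicator (A i) \<omega> :: ennreal) \<in> borel_measurable M" for i
        using A by (simp add: borel_measurable_indicator)
      have "ennreal x * ennreal s = ennreal x * (\<Sum>i. \<integral>\<^sup>+\<omega>. indicator (A i) \<omega> \<partial>M)"
        using s(1) A by simp
      also have "\<dots> = ennreal x * (\<integral>\<^sup>+\<omega>. (\<Sum>i. indicator (A i) \<omega>) \<partial>M)"
        by (subst nn_integral_suminf[OF meas3]) simp
      also have "\<dots> = (\<integral>\<^sup>+\<omega>. ennreal x * (\<Sum>i. indicator (A i) \<omega>) \<partial>M)"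
        by (intro nn_integral_cmult[symmetric] borel_measurable_suminf_order meas3)
      also have "\<dots> \<le> (\<integral>\<^sup>+\<omega>. (\<Sum>i. ennreal (V i \<omega> * indicator (A i) \<omega>)) + ennreal x * (\<Sum>i. indicator {\<omega>. 0 < V i \<omega> \<and> V i \<omega> < x} \<omega>) \<partial>M)"
        by (intro nn_integral_mono point)
      also have "\<dots> = I + (\<integral>\<^sup>+\<omega>. ennreal x * (\<Sum>i. indicator {\<omega>. 0 < V i \<omega> \<and> V i \<omega> < x} \<omega>) \<partial>M)"
        unfolding I_def
        by (intro nn_integral_add borel_measurable_suminf_order meas1 meas2 borel_measurable_times_ennreal borel_measurable_const)
      also have "\<dots> = I + ennreal x * mu_int M V x"
        unfolding mu_int_def
        by (subst nn_integral_cmult) (auto intro: borel_measurable_suminf_order meas2)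
      also have "\<dots> \<le> I + ennreal x * ennreal (c * x)"
        using mub[OF xpos xd] by (intro add_left_mono mult_left_mono) auto
      finally have key: "ennreal (x * s) \<le> I + ennreal (c * x * x)"
        using xpos cpos s(2) by (simp add: ennreal_mult[symmetric] mult.assoc mult.commute mult.left_commute)
      show ?thesis
      proof (cases "I = \<top>")
        case True then show ?thesis by simp
      next
        case False
        then obtain r where r: "I = ennreal r" "r \<ge> 0" by (cases I) auto
        have "x * s \<le> r + c * x * x"
          using key r xpos cpos by (simp add: ennreal_plus[symmetric] del: ennreal_plus)
        then have "\<beta> * s^2 \<le> r"
          unfolding x_def \<beta>_def using cpos by (simp add: field_simps power2_eq_square)
        moreover have "0 \<le> \<beta>" using cpos unfolding \<beta>_def by simp
        ultimately show ?thesis using r s by (simp add: ennreal_mult[symmetric] ennreal_power)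
      qed
    qed
  qed
qed

end
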